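(* Let $G$ be a graph and $v$ a vertex of $G$ of degree $1$. Then $G-v$ (delete $v$ and its incident edge) is strongly EFX-orientable if and only if $G$ is strongly EFX-orientable.
   Context: All graphs are finite and simple. For a graph $G=(V,E)$ and $v\in V$, $E(v)$ is the set of edges incident to $v$. A graphical instance on $G$ assigns to each vertex $v$ a valuation $f_v:2^E\to\mathbb{R}_{\ge 0}$ that is monotone ($A\subseteq B\Rightarrow f_v(A)\le f_v(B)$) and satisfies $f_v(X)=f_v(X\cap E(v))$ for all $X\subseteq E$. An orientation of $G$ chooses for each edge one of its endpoints as its head; vertex $v$ receives the bundle $X_v$ of edges whose head is $v$. The orientation is EFX if for all $u,v\in V$ and every $g\in X_v$, $f_u(X_u)\ge f_u(X_v\setminus\{g\})$. A graph $G$ is strongly EFX-orientable if for every graphical instance on $G$ there exists an EFX orientation. *)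

theory Defs
  imports Complex_Main
begin

definition simple_graph :: "'a set \<Rightarrow> 'a set set \<Rightarrow> bool" where
  "simple_graph V E \<longleftrightarrow> finite V \<and>
     (\<forall>e\<in>E. \<exists>x y. x \<noteq> y \<and> x \<in> V \<and> y \<in> V \<and> e = {x, y})"

definition inc_edges :: "'a set set \<Rightarrow> 'a \<Rightarrow> 'a set set" where
  "inc_edges E v = {e \<in> E. v \<in> e}"

definition degree :: "'a set set \<Rightarrow> 'a \<Rightarrow> nat" where
  "degree E v = card (inc_edges E v)"

definition del_vertex_V :: "'a set \<Rightarrow> 'a \<Rightarrow> 'a set" where
  "del_vertex_V V v = V - {v}"

definition del_vertex_E :: "'a set set \<Rightarrow> 'a \<Rightarrow> 'a set set" where
  "del_vertex_E E v = {e \<in> E. v \<notin> e}"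

definition graphical_instance ::
  "'a set \<Rightarrow> 'a set set \<Rightarrow> ('a \<Rightarrow> 'a set set \<Rightarrow> real) \<Rightarrow> bool" where
  "graphical_instance V E f \<longleftrightarrow>
     (\<forall>v\<in>V. \<forall>X. X \<subseteq> E \<longrightarrow> f v X \<ge> 0) \<and>
     (\<forall>v\<in>V. \<forall>A B. A \<subseteq> B \<and> B \<subseteq> E \<longrightarrow> f v A \<le> f v B) \<and>
     (\<forall>v\<in>V. \<forall>X. X \<subseteq> E \<longrightarrow> f v X = f v (X \<inter> inc_edges E v))"

definition orientation :: "'a set set \<Rightarrow> ('a set \<Rightarrow> 'a) \<Rightarrow> bool" where
  "orientation E h \<longleftrightarrow> (\<forall>e\<in>E. h e \<in> e)"

definition bundle_of :: "'a set set \<Rightarrow> ('a set \<Rightarrow> 'a) \<Rightarrow> 'a \<Rightarrow> 'a set set" where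
  "bundle_of E h v = {e \<in> E. h e = v}"

definition EFX_orientation ::
  "'a set \<Rightarrow> 'a set set \<Rightarrow> ('a \<Rightarrow> 'a set set \<Rightarrow> real) \<Rightarrow> ('a set \<Rightarrow> 'a) \<Rightarrow> bool" where
  "EFX_orientation V E f h \<longleftrightarrow> orientation E h \<and>
     (\<forall>u\<in>V. \<forall>v\<in>V. \<forall>g\<in>bundle_of E h v.
        f u (bundle_of E h u) \<ge> f u (bundle_of E h v - {g}))"

definition strongly_EFX_orientable :: "'a set \<Rightarrow> 'a set set \<Rightarrow> bool" where
  "strongly_EFX_orientable V E \<longleftrightarrow>
     (\<forall>f. graphical_instance V E f \<longrightarrow> (\<exists>h. EFX_orientation V E f h))"

end

theory Submission
  imports Defs
begin

lemma gi_nonneg: "graphical_instance V E f \<Longrightarrow> u \<in> V \<Longrightarrow> X \<subseteq> E \<Longrightarrow> f u X \<ge> 0"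
proof -
  assume g: "graphical_instance V E f" and u: "u \<in> V" and X: "X \<subseteq> E"
  from g have "\<forall>v\<in>V. \<forall>X. X \<subseteq> E \<longrightarrow> f v X \<ge> 0" unfolding graphical_instance_def by (rule conjunct1)
  then show ?thesis using u X by simp
qed
lemma gi_mono: "graphical_instance V E f \<Longrightarrow> u \<in> V \<Longrightarrow> A \<subseteq> B \<Longrightarrow> B \<subseteq> E \<Longrightarrow> f u A \<le> f u B"
proof -
  assume g: "graphical_instance V E f" and u: "u \<in> V" and AB: "A \<subseteq> B" "B \<subseteq> E"
  from g have "\<forall>v\<in>V. \<forall>A B. A \<subseteq> B \<and> B \<subseteq> E \<longrightarrow> f v A \<le> f v B"
    unfolding graphical_instance_def by (rule conjunct1[OF conjunct2])
  then show ?thesis using u AB by simp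
qed
lemma gi_loc: "graphical_instance V E f \<Longrightarrow> u \<in> V \<Longrightarrow> X \<subseteq> E \<Longrightarrow> f u X = f u (X \<inter> inc_edges E u)"
proof -
  assume g: "graphical_instance V E f" and u: "u \<in> V" and X: "X \<subseteq> E"
  from g have h: "\<forall>v\<in>V. \<forall>X. X \<subseteq> E \<longrightarrow> f v X = f v (X \<inter> inc_edges E v)"
    unfolding graphical_instance_def by (rule conjunct2[OF conjunct2])
  have "\<forall>X. X \<subseteq> E \<longrightarrow> f u X = f u (X \<inter> inc_edges E u)" using h u by (rule bspec)
  then have "X \<subseteq> E \<longrightarrow> f u X = f u (X \<inter> inc_edges E u)" by (rule spec)
  then show ?thesis using X by (rule mp)
qed
lemma efx_D: "EFX_orientation V E f h \<Longrightarrow> u \<in> V \<Longrightarrow> x \<in> V \<Longrightarrow> g \<in> bundle_of E h x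
   \<Longrightarrow> f u (bundle_of E h u) \<ge> f u (bundle_of E h x - {g})"
  unfolding EFX_orientation_def by auto

lemma dir1:
  fixes V :: "'a set" and E :: "'a set set" and v :: 'a
  assumes deg: "degree E v = 1"
    and S: "strongly_EFX_orientable (del_vertex_V V v) (del_vertex_E E v)"
  shows "strongly_EFX_orientable V E"
  unfolding strongly_EFX_orientable_def
proof (intro allI impI)
  fix f assume gi: "graphical_instance V E f"
  let ?V' = "del_vertex_V V v" and ?E' = "del_vertex_E E v"
  have E'sub: "?E' \<subseteq> E" by (auto simp: del_vertex_E_def)
  have "graphical_instance ?V' ?E' f"
    unfolding graphical_instance_def
  proof (intro conjI ballI allI impI)
    fix u X assume u: "u \<in> ?V'" and X: "X \<subseteq> ?E'"
    then have uV: "u \<in> V" and XE: "X \<subseteq> E" using E'sub by (auto simp: del_vertex_V_def)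
    show "f u X \<ge> 0" using gi_nonneg[OF gi uV XE] .
    have "X \<inter> inc_edges E u = X \<inter> inc_edges ?E' u"
      using X by (auto simp: inc_edges_def del_vertex_E_def)
    moreover have "f u X = f u (X \<inter> inc_edges E u)"
      using gi_loc[OF gi uV XE] .
    ultimately show "f u X = f u (X \<inter> inc_edges ?E' u)" by simp
  next
    fix u A B assume u: "u \<in> ?V'" and AB: "A \<subseteq> B \<and> B \<subseteq> ?E'"
    then show "f u A \<le> f u B" using gi_mono[OF gi, of u A B] E'sub
      unfolding del_vertex_V_def by blast
  qed
  then obtain h' where h': "EFX_orientation ?V' ?E' f h'"
    using S unfolding strongly_EFX_orientable_def by blast
  define h where "h e = (if v \<in> e then v else h' e)" for e
  have or': "\<forall>e\<in>?E'. h' e \<in> e" using h' unfolding EFX_orientation_def orientation_def by blast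
  have orh: "orientation E h"
    unfolding orientation_def h_def using or' by (auto simp: del_vertex_E_def)
  have Bv: "bundle_of E h v = inc_edges E v"
    using or' unfolding bundle_of_def inc_edges_def h_def del_vertex_E_def by auto
  have Bu: "bundle_of E h u = bundle_of ?E' h' u" if "u \<noteq> v" for u
    using that unfolding bundle_of_def h_def del_vertex_E_def by auto
  obtain e0 where inc: "inc_edges E v = {e0}"
    using deg unfolding degree_def by (metis card_1_singletonE)
  have mono: "\<And>u A B. u \<in> V \<Longrightarrow> A \<subseteq> B \<Longrightarrow> B \<subseteq> E \<Longrightarrow> f u A \<le> f u B"
    using gi_mono[OF gi] by blast
  have loc: "\<And>u X. u \<in> V \<Longrightarrow> X \<subseteq> E \<Longrightarrow> f u X = f u (X \<inter> inc_edges E u)"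
    using gi_loc[OF gi] by blast
  have BE: "bundle_of E h x \<subseteq> E" for x by (auto simp: bundle_of_def)
  show "\<exists>h. EFX_orientation V E f h"
  proof (intro exI)
    show "EFX_orientation V E f h"
      unfolding EFX_orientation_def
    proof (intro conjI orh ballI)
      fix u x g assume u: "u \<in> V" and x: "x \<in> V" and g: "g \<in> bundle_of E h x"
      show "f u (bundle_of E h u) \<ge> f u (bundle_of E h x - {g})"
      proof (cases "x = v")
        case True
        then have e: "bundle_of E h x - {g} = {}" using g Bv inc by auto
        have m: "f u {} \<le> f u (bundle_of E h u)" by (rule mono[OF u _ BE]) simp
        show ?thesis unfolding e by (rule m)
      next
        case xv: False
        show ?thesis
        proof (cases "u = v")
          case True
          have e1: "(bundle_of E h x - {g}) \<inter> inc_edges E u = {}"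
            using True xv unfolding bundle_of_def inc_edges_def h_def by auto
          have "bundle_of E h x - {g} \<subseteq> E" using BE by blast
          then have "f u (bundle_of E h x - {g}) = f u ((bundle_of E h x - {g}) \<inter> inc_edges E u)"
            by (rule loc[OF u])
          then have e: "f u (bundle_of E h x - {g}) = f u {}" unfolding e1 .
          have m: "f u {} \<le> f u (bundle_of E h u)" by (rule mono[OF u _ BE]) simp
          show ?thesis unfolding e by (rule m)
        next
          case uv: False
          have "u \<in> ?V'" "x \<in> ?V'" using u x uv xv by (auto simp: del_vertex_V_def)
          moreover have "g \<in> bundle_of ?E' h' x" using g Bu[OF xv] by simp
          ultimately have "f u (bundle_of ?E' h' u) \<ge> f u (bundle_of ?E' h' x - {g})"
            using efx_D[OF h'] by blast
          then show ?thesis using Bu[OF xv] Bu[OF uv] by simp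
        qed
      qed
    qed
  qed
qed

lemma dir2:
  fixes V :: "'a set" and E :: "'a set set" and v :: 'a
  assumes S: "strongly_EFX_orientable V E"
  shows "strongly_EFX_orientable (del_vertex_V V v) (del_vertex_E E v)"
  unfolding strongly_EFX_orientable_def
proof (intro allI impI)
  fix f' assume gi: "graphical_instance (del_vertex_V V v) (del_vertex_E E v) f'"
  let ?V' = "del_vertex_V V v" and ?E' = "del_vertex_E E v"
  define f where "f u X = (if u = v then 0 else f' u (X \<inter> ?E'))" for u X
  have E'sub: "?E' \<subseteq> E" by (auto simp: del_vertex_E_def)
  have "graphical_instance V E f"
    unfolding graphical_instance_def
  proof (intro conjI ballI allI impI)
    fix u X assume u: "u \<in> V" and X: "X \<subseteq> E"
    show "f u X \<ge> 0"
    proof (cases "u = v")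
      case False
      then have "u \<in> ?V'" using u by (auto simp: del_vertex_V_def)
      then show ?thesis using gi_nonneg[OF gi, of u "X \<inter> ?E'"] False unfolding f_def by auto
    qed (simp add: f_def)
    show "f u X = f u (X \<inter> inc_edges E u)"
    proof (cases "u = v")
      case False
      then have u': "u \<in> ?V'" using u by (auto simp: del_vertex_V_def)
      have "X \<inter> inc_edges E u \<inter> ?E' = (X \<inter> ?E') \<inter> inc_edges ?E' u"
        by (auto simp: inc_edges_def del_vertex_E_def)
      moreover have "f' u (X \<inter> ?E') = f' u ((X \<inter> ?E') \<inter> inc_edges ?E' u)"
        using gi_loc[OF gi u', of "X \<inter> ?E'"] by auto
      ultimately show ?thesis using False by (simp add: f_def)
    qed (simp add: f_def)
  next
    fix u A B assume u: "u \<in> V" and AB: "A \<subseteq> B \<and> B \<subseteq> E"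
    show "f u A \<le> f u B"
    proof (cases "u = v")
      case False
      then have u': "u \<in> ?V'" using u by (auto simp: del_vertex_V_def)
      have "A \<inter> ?E' \<subseteq> B \<inter> ?E'" "B \<inter> ?E' \<subseteq> ?E'" using AB by auto
      then show ?thesis using gi_mono[OF gi u'] False unfolding f_def by auto
    qed (simp add: f_def)
  qed
  then obtain h where h: "EFX_orientation V E f h"
    using S unfolding strongly_EFX_orientable_def by blast
  have B': "bundle_of ?E' h u = bundle_of E h u \<inter> ?E'" for u
    by (auto simp: bundle_of_def del_vertex_E_def)
  show "\<exists>h. EFX_orientation ?V' ?E' f' h"
  proof (intro exI)
    show "EFX_orientation ?V' ?E' f' h"
      unfolding EFX_orientation_def
    proof (intro conjI ballI)
      show "orientation ?E' h" using h E'sub unfolding EFX_orientation_def orientation_def by blast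
    next
      fix u x g assume u: "u \<in> ?V'" and x: "x \<in> ?V'" and g: "g \<in> bundle_of ?E' h x"
      have uV: "u \<in> V" "u \<noteq> v" "x \<in> V" using u x by (auto simp: del_vertex_V_def)
      have gB: "g \<in> bundle_of E h x" using g B' by auto
      have "f u (bundle_of E h u) \<ge> f u (bundle_of E h x - {g})"
        using efx_D[OF h uV(1) uV(3) gB] .
      moreover have "(bundle_of E h x - {g}) \<inter> ?E' = bundle_of ?E' h x - {g}" using B' by auto
      ultimately show "f' u (bundle_of ?E' h u) \<ge> f' u (bundle_of ?E' h x - {g})"
        using uV B' by (simp add: f_def)
    qed
  qed
qed

theorem mainTheorem9:
  fixes V :: "'a set" and E :: "'a set set" and v :: 'a
  assumes "simple_graph V E" and "v \<in> V" and "degree E v = 1"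
  shows "strongly_EFX_orientable (del_vertex_V V v) (del_vertex_E E v)
           \<longleftrightarrow> strongly_EFX_orientable V E"
proof
  assume "strongly_EFX_orientable (del_vertex_V V v) (del_vertex_E E v)"
  then show "strongly_EFX_orientable V E" by (rule dir1[OF assms(3)])
next
  assume "strongly_EFX_orientable V E"
  then show "strongly_EFX_orientable (del_vertex_V V v) (del_vertex_E E v)" by (rule dir2)
qed

end
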